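(* Let $G=K_n$ be the complete graph of order $n\geq 3$, let $g:A\to B$ be a function and let $s=|g(A)|$ with $1<s<n$. Then $2(n-s)-1\leq fix(F_G)\leq 2n-s-3$.
   Context: A set $S\subseteq V(H)$ is a fixing set of a graph $H$ if the only automorphism of $H$ fixing every vertex of $S$ is the identity; $fix(H)$ is the minimum cardinality of a fixing set of $H$. Functigraph: let $G_1,G_2$ be disjoint copies of a connected graph $G$, with $A=V(G_1)$, $B=V(G_2)$, and let $g:A\to B$ be a function. The functigraph $F_G$ has vertex set $A\cup B$ and edge set $E(G_1)\cup E(G_2)\cup\{ug(u):u\in A\}$. *)

theory Defs
  imports Main
begin

text \<open>A (simple) graph is given by a vertex set V and a symmetric irreflexive
  adjacency relation E (only its restriction to V matters).\<close>

definition graph_aut :: "'v set \<Rightarrow> ('v \<Rightarrow> 'v \<Rightarrow> bool) \<Rightarrow> ('v \<Rightarrow> 'v) \<Rightarrow> bool" where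
  "graph_aut V E \<sigma> \<longleftrightarrow> bij_betw \<sigma> V V \<and> (\<forall>x\<in>V. \<forall>y\<in>V. E x y \<longleftrightarrow> E (\<sigma> x) (\<sigma> y))"

definition fixing_set :: "'v set \<Rightarrow> ('v \<Rightarrow> 'v \<Rightarrow> bool) \<Rightarrow> 'v set \<Rightarrow> bool" where
  "fixing_set V E S \<longleftrightarrow> S \<subseteq> V \<and>
     (\<forall>\<sigma>. graph_aut V E \<sigma> \<and> (\<forall>x\<in>S. \<sigma> x = x) \<longrightarrow> (\<forall>x\<in>V. \<sigma> x = x))"

definition fix_num :: "'v set \<Rightarrow> ('v \<Rightarrow> 'v \<Rightarrow> bool) \<Rightarrow> nat" where
  "fix_num V E = Min (card ` {S. fixing_set V E S})"

text \<open>Functigraph: two disjoint copies Inl ` V (= A) and Inr ` V (= B) of G;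
  g : A \<rightarrow> B is represented by g : V \<Rightarrow> V, i.e. Inl u is joined to Inr (g u).\<close>
definition functigraph_V :: "'a set \<Rightarrow> ('a + 'a) set" where
  "functigraph_V V = Inl ` V \<union> Inr ` V"

fun functigraph_E :: "('a \<Rightarrow> 'a \<Rightarrow> bool) \<Rightarrow> ('a \<Rightarrow> 'a) \<Rightarrow> 'a + 'a \<Rightarrow> 'a + 'a \<Rightarrow> bool" where
  "functigraph_E E g (Inl u) (Inl v) = E u v"
| "functigraph_E E g (Inr u) (Inr v) = E u v"
| "functigraph_E E g (Inl u) (Inr w) = (w = g u)"
| "functigraph_E E g (Inr w) (Inl u) = (w = g u)"

end

theory Submission
  imports Defs
begin

lemma aut_deg:
  assumes aut: "graph_aut V E \<sigma>" and xV: "x \<in> V"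
  shows "card {y\<in>V. E (\<sigma> x) y} = card {y\<in>V. E x y}"
proof -
  have bij: "bij_betw \<sigma> V V" and hom: "\<forall>a\<in>V. \<forall>b\<in>V. E a b \<longleftrightarrow> E (\<sigma> a) (\<sigma> b)"
    using aut unfolding graph_aut_def by auto
  have "{y\<in>V. E (\<sigma> x) y} = \<sigma> ` {y\<in>V. E x y}"
  proof
    show "\<sigma> ` {y\<in>V. E x y} \<subseteq> {y\<in>V. E (\<sigma> x) y}"
      using bij hom xV by (auto simp: bij_betw_def)
  next
    show "{y\<in>V. E (\<sigma> x) y} \<subseteq> \<sigma> ` {y\<in>V. E x y}"
    proof
      fix y assume y: "y \<in> {y\<in>V. E (\<sigma> x) y}"
      then obtain y' where "y' \<in> V" "y = \<sigma> y'" using bij by (auto simp: bij_betw_def)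
      then show "y \<in> \<sigma> ` {y\<in>V. E x y}" using y hom xV by auto
    qed
  qed
  moreover have "inj_on \<sigma> {y\<in>V. E x y}"
    using bij by (auto simp: bij_betw_def intro: inj_on_subset)
  ultimately show ?thesis by (simp add: card_image)
qed

lemma fix_step:
  assumes aut: "graph_aut V E \<sigma>" and TV: "T \<subseteq> V" and fixT: "\<forall>z\<in>T. \<sigma> z = z"
    and xV: "x \<in> V"
    and sep: "\<forall>y\<in>V. y \<noteq> x \<longrightarrow> y \<notin> T \<longrightarrow>
       (\<exists>z\<in>T. E x z \<noteq> E y z) \<or> card {v\<in>V. E x v} \<noteq> card {v\<in>V. E y v}"
  shows "\<sigma> x = x"
proof (rule ccontr)
  assume ne: "\<sigma> x \<noteq> x"
  have bij: "bij_betw \<sigma> V V" and hom: "\<forall>a\<in>V. \<forall>b\<in>V. E a b \<longleftrightarrow> E (\<sigma> a) (\<sigma> b)"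
    using aut unfolding graph_aut_def by auto
  have yV: "\<sigma> x \<in> V" using bij xV by (auto simp: bij_betw_def)
  have yT: "\<sigma> x \<notin> T"
  proof
    assume "\<sigma> x \<in> T"
    then have "\<sigma> (\<sigma> x) = \<sigma> x" using fixT by auto
    then have "\<sigma> x = x" using bij yV xV by (auto simp: bij_betw_def inj_on_def)
    then show False using ne by simp
  qed
  from sep yV ne yT
  have "(\<exists>z\<in>T. E x z \<noteq> E (\<sigma> x) z) \<or> card {v\<in>V. E x v} \<noteq> card {v\<in>V. E (\<sigma> x) v}"
    by auto
  then show False
  proof
    assume "\<exists>z\<in>T. E x z \<noteq> E (\<sigma> x) z"
    then obtain z where z: "z \<in> T" "E x z \<noteq> E (\<sigma> x) z" by auto
    then have "z \<in> V" "\<sigma> z = z" using TV fixT by auto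
    then show False using z hom xV by metis
  next
    assume "card {v\<in>V. E x v} \<noteq> card {v\<in>V. E (\<sigma> x) v}"
    then show False using aut_deg[OF aut xV] by simp
  qed
qed

lemma swap_aut:
  assumes xV: "x \<in> V" and yV: "y \<in> V"
    and tw: "\<forall>z\<in>V. z \<noteq> x \<longrightarrow> z \<noteq> y \<longrightarrow> (E x z \<longleftrightarrow> E y z) \<and> (E z x \<longleftrightarrow> E z y)"
    and s1: "E x y \<longleftrightarrow> E y x" and s2: "E x x \<longleftrightarrow> E y y"
  shows "graph_aut V E (\<lambda>z. if z = x then y else if z = y then x else z)"
  unfolding graph_aut_def
proof
  show "bij_betw (\<lambda>z. if z = x then y else if z = y then x else z) V V"
    by (rule bij_betw_byWitness[where f'="\<lambda>z. if z = x then y else if z = y then x else z"])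
       (use xV yV in auto)
  show "\<forall>a\<in>V. \<forall>b\<in>V. E a b = E (if a = x then y else if a = y then x else a)
           (if b = x then y else if b = y then x else b)"
  proof (intro ballI)
    fix a b assume a: "a \<in> V" and b: "b \<in> V"
    show "E a b = E (if a = x then y else if a = y then x else a)
           (if b = x then y else if b = y then x else b)"
    proof (cases "x = y")
      case True then show ?thesis by simp
    next
      case xy: False
      have t1: "E x z \<longleftrightarrow> E y z" "E z x \<longleftrightarrow> E z y" if "z \<in> V" "z \<noteq> x" "z \<noteq> y" for z
        using tw that by auto
      show ?thesis
      proof (cases "a = x")
        case ax: True
        show ?thesis
        proof (cases "b = x")
          case True then show ?thesis using ax s2 by simp
        next
          case bx: False
          show ?thesis
          proof (cases "b = y")
            case True then show ?thesis using ax bx s1 by simp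
          next
            case False then show ?thesis using ax bx t1(1)[OF b bx False] by simp
          qed
        qed
      next
        case ax: False
        show ?thesis
        proof (cases "a = y")
          case ay: True
          show ?thesis
          proof (cases "b = x")
            case True then show ?thesis using ax ay s1 xy by simp
          next
            case bx: False
            show ?thesis
            proof (cases "b = y")
              case True then show ?thesis using ax ay bx s2 by simp
            next
              case False then show ?thesis using ax ay bx t1(1)[OF b bx False] by simp
            qed
          qed
        next
          case ay: False
          show ?thesis
          proof (cases "b = x")
            case True then show ?thesis using ax ay t1(2)[OF a ax ay] by simp
          next
            case bx: False
            show ?thesis
            proof (cases "b = y")
              case True then show ?thesis using ax ay bx t1(2)[OF a ax ay] by simp
            next
              case False then show ?thesis using ax ay bx by simp
            qed
          qed
        qed
      qed
    qed
  qed
qed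

lemma FE_simps_extra:
  "functigraph_E E g (Inl u) (Inr w) = (w = g u)"
  "functigraph_E E g (Inr w) (Inl u) = (w = g u)"
  by simp_all

lemma lower_card:
  assumes fin: "finite V" and gV: "g ` V \<subseteq> V"
    and fs: "fixing_set (functigraph_V V) (functigraph_E (\<lambda>x y. x \<noteq> y) g) S"
  shows "(card V - card (g ` V)) + (card V - card (g ` V) - 1) \<le> card S"
proof -
  let ?FV = "functigraph_V V" and ?FE = "functigraph_E (\<lambda>x y. x \<noteq> y) g"
  have SFV: "S \<subseteq> ?FV" and fx: "\<And>\<sigma>. graph_aut ?FV ?FE \<sigma> \<Longrightarrow> (\<forall>x\<in>S. \<sigma> x = x) \<Longrightarrow> (\<forall>x\<in>?FV. \<sigma> x = x)"
    using fs unfolding fixing_set_def by auto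
  have finFV: "finite ?FV" using fin unfolding functigraph_V_def by auto
  have finS: "finite S" using SFV finFV finite_subset by blast
  define X where "X = {u\<in>V. Inl u \<notin> S}"
  have injX: "inj_on g X"
  proof (rule inj_onI, rule ccontr)
    fix u v assume u: "u \<in> X" and v: "v \<in> X" and guv: "g u = g v" and ne: "u \<noteq> v"
    let ?\<sigma> = "\<lambda>z. if z = Inl u then Inl v else if z = Inl v then Inl u else z"
    have aut: "graph_aut ?FV ?FE ?\<sigma>"
    proof (rule swap_aut)
      show "Inl u \<in> ?FV" "Inl v \<in> ?FV" using u v unfolding X_def functigraph_V_def by auto
      show "\<forall>z\<in>?FV. z \<noteq> Inl u \<longrightarrow> z \<noteq> Inl v \<longrightarrow>
         (?FE (Inl u) z \<longleftrightarrow> ?FE (Inl v) z) \<and> (?FE z (Inl u) \<longleftrightarrow> ?FE z (Inl v))"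
      proof (intro ballI impI)
        fix z assume "z \<in> ?FV" "z \<noteq> Inl u" "z \<noteq> Inl v"
        then show "(?FE (Inl u) z \<longleftrightarrow> ?FE (Inl v) z) \<and> (?FE z (Inl u) \<longleftrightarrow> ?FE z (Inl v))"
          using guv by (cases z) auto
      qed
      show "?FE (Inl u) (Inl v) \<longleftrightarrow> ?FE (Inl v) (Inl u)" by auto
      show "?FE (Inl u) (Inl u) \<longleftrightarrow> ?FE (Inl v) (Inl v)" by simp
    qed
    have "\<forall>x\<in>S. ?\<sigma> x = x" using u v unfolding X_def by auto
    then have "\<forall>x\<in>?FV. ?\<sigma> x = x" using fx[OF aut] by blast
    moreover have "Inl u \<in> ?FV" using u unfolding X_def functigraph_V_def by auto
    ultimately show False using ne by auto
  qed
  have XV: "X \<subseteq> V" unfolding X_def by auto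
  have cX: "card X \<le> card (g ` V)"
  proof -
    have "card (g ` X) \<le> card (g ` V)" by (rule card_mono) (use fin XV in auto)
    then show ?thesis using card_image[OF injX] by simp
  qed
  define Y where "Y = {w\<in>V - g ` V. Inr w \<notin> S}"
  have finY: "finite Y" using fin unfolding Y_def by auto
  have cY: "card Y \<le> 1"
  proof -
    have "\<forall>a\<in>Y. \<forall>b\<in>Y. a = b"
    proof (intro ballI, rule ccontr)
      fix a b assume a: "a \<in> Y" and b: "b \<in> Y" and ne: "a \<noteq> b"
      let ?\<sigma> = "\<lambda>z. if z = Inr a then Inr b else if z = Inr b then Inr a else z"
      have aut: "graph_aut ?FV ?FE ?\<sigma>"
      proof (rule swap_aut)
        show "Inr a \<in> ?FV" "Inr b \<in> ?FV" using a b unfolding Y_def functigraph_V_def by auto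
        show "\<forall>z\<in>?FV. z \<noteq> Inr a \<longrightarrow> z \<noteq> Inr b \<longrightarrow>
           (?FE (Inr a) z \<longleftrightarrow> ?FE (Inr b) z) \<and> (?FE z (Inr a) \<longleftrightarrow> ?FE z (Inr b))"
        proof (intro ballI impI)
          fix z assume z: "z \<in> ?FV" "z \<noteq> Inr a" "z \<noteq> Inr b"
          show "(?FE (Inr a) z \<longleftrightarrow> ?FE (Inr b) z) \<and> (?FE z (Inr a) \<longleftrightarrow> ?FE z (Inr b))"
          proof (cases z)
            case (Inl z')
            then have "z' \<in> V" using z unfolding functigraph_V_def by auto
            then have "a \<noteq> g z'" "b \<noteq> g z'" using a b unfolding Y_def by auto
            then show ?thesis using Inl by simp
          next
            case (Inr z')
            then show ?thesis using z by auto
          qed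
        qed
        show "?FE (Inr a) (Inr b) \<longleftrightarrow> ?FE (Inr b) (Inr a)" by auto
        show "?FE (Inr a) (Inr a) \<longleftrightarrow> ?FE (Inr b) (Inr b)" by simp
      qed
      have "\<forall>x\<in>S. ?\<sigma> x = x" using a b unfolding Y_def by auto
      then have "\<forall>x\<in>?FV. ?\<sigma> x = x" using fx[OF aut] by blast
      moreover have "Inr a \<in> ?FV" using a unfolding Y_def functigraph_V_def by auto
      ultimately show False using ne by auto
    qed
    then show ?thesis using card_le_Suc0_iff_eq[OF finY] by simp
  qed
  define XS where "XS = V - X"
  define YS where "YS = (V - g ` V) - Y"
  have cXS: "card XS = card V - card X" unfolding XS_def using card_Diff_subset[OF finite_subset[OF XV fin] XV] .
  have cD: "card (V - g ` V) = card V - card (g ` V)"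
    using card_Diff_subset[OF finite_imageI[OF fin] gV] .
  have YD: "Y \<subseteq> V - g ` V" unfolding Y_def by auto
  have cYS: "card YS = card (V - g ` V) - card Y" unfolding YS_def
    using card_Diff_subset[OF finY YD] .
  have sub: "Inl ` XS \<union> Inr ` YS \<subseteq> S" unfolding XS_def YS_def X_def Y_def by auto
  have "card (Inl ` XS \<union> Inr ` YS) = card XS + card YS"
  proof -
    have "card (Inl ` XS \<union> Inr ` YS) = card (Inl ` XS :: ('a + 'a) set) + card (Inr ` YS :: ('a + 'a) set)"
      apply (rule card_Un_disjoint)
      using fin apply (auto simp: XS_def YS_def)
      done
    also have "\<dots> = card XS + card YS" by (simp add: card_image)
    finally show ?thesis .
  qed
  then have "card XS + card YS \<le> card S" using card_mono[OF finS sub] by simp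
  then show ?thesis using cXS cYS cX cY cD by linarith
qed

lemma upper_set:
  assumes fin: "finite V" and gV: "g ` V \<subseteq> V"
    and s1: "1 < card (g ` V)" and s2: "card (g ` V) < card V"
  shows "\<exists>S. fixing_set (functigraph_V V) (functigraph_E (\<lambda>x y. x \<noteq> y) g) S
           \<and> card S = 2 * card V - card (g ` V) - 3"
proof -
  let ?FV = "functigraph_V V" and ?FE = "functigraph_E (\<lambda>x y. x \<noteq> y) g"
  define n where "n = card V"
  define deg where "deg x = card {v\<in>?FV. ?FE x v}" for x
  have finFV: "finite ?FV" using fin unfolding functigraph_V_def by auto
  have "V - g ` V \<noteq> {}"
  proof
    assume "V - g ` V = {}" then have "g ` V = V" using gV by auto
    then show False using s2 by simp
  qed
  then obtain w0 where w0: "w0 \<in> V" "w0 \<notin> g ` V" by auto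
  have "\<not> inj_on g V" using s2 card_image by fastforce
  then obtain a b where ab: "a \<in> V" "b \<in> V" "a \<noteq> b" "g a = g b" unfolding inj_on_def by auto
  define w1 where "w1 = g a"
  have w1: "w1 \<in> g ` V" "w1 \<in> V" using ab gV unfolding w1_def by auto
  have "g ` V \<noteq> {w1}"
  proof
    assume "g ` V = {w1}" then have "card (g ` V) = 1" by simp
    then show False using s1 by simp
  qed
  then obtain w2 where w2: "w2 \<in> g ` V" "w2 \<noteq> w1" using w1 by blast
  have w2V: "w2 \<in> V" using w2 gV by auto
  define r where "r w = (SOME u. u \<in> V \<and> g u = w)" for w
  have rp: "r w \<in> V \<and> g (r w) = w" if "w \<in> g ` V" for w
  proof -
    have "\<exists>u. u \<in> V \<and> g u = w" using that by auto
    then show ?thesis unfolding r_def by (rule someI_ex)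
  qed
  define u1 where "u1 = (if a \<noteq> r w1 then a else b)"
  have u1: "u1 \<in> V" "g u1 = w1" "u1 \<noteq> r w1" using ab unfolding u1_def w1_def by auto
  define R where "R = r ` g ` V"
  have RV: "R \<subseteq> V" using rp unfolding R_def by auto
  have u1R: "u1 \<notin> R"
  proof
    assume "u1 \<in> R" then obtain w where w: "w \<in> g ` V" "u1 = r w" unfolding R_def by auto
    then have "w = w1" using rp[OF w(1)] u1 by simp
    then show False using w u1 by simp
  qed
  have injr: "inj_on r (g ` V)"
  proof (rule inj_onI)
    fix x y assume x: "x \<in> g ` V" and y: "y \<in> g ` V" and e: "r x = r y"
    have "x = g (r x)" using rp[OF x] by simp
    also have "\<dots> = g (r y)" using e by simp
    also have "\<dots> = y" using rp[OF y] by simp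
    finally show "x = y" .
  qed
  have cR: "card R = card (g ` V)" unfolding R_def using card_image[OF injr] .
  define S0 where "S0 = Inr ` (V - {w0, w1, w2}) \<union> Inl ` (V - R)"
  have S0FV: "S0 \<subseteq> ?FV" unfolding S0_def functigraph_V_def by auto
  have dist: "w0 \<noteq> w1" "w0 \<noteq> w2" using w0 w1 w2 by auto
  have c3: "card (V - {w0, w1, w2}) = n - 3"
  proof -
    have "card {w0, w1, w2} = 3" using dist w2 by auto
    moreover have "{w0, w1, w2} \<subseteq> V" using w0 w1 w2V by auto
    ultimately show ?thesis unfolding n_def using card_Diff_subset[of "{w0, w1, w2}" V] by simp
  qed
  have cVR: "card (V - R) = n - card (g ` V)"
    unfolding n_def using card_Diff_subset[OF finite_subset[OF RV fin] RV] cR by simp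
  have n3: "3 \<le> n"
  proof -
    have "{w0, w1, w2} \<subseteq> V" using w0 w1 w2V by auto
    then have "card {w0, w1, w2} \<le> n" unfolding n_def using card_mono fin by blast
    then show ?thesis using dist w2 by auto
  qed
  have cS0: "card S0 = 2 * card V - card (g ` V) - 3"
  proof -
    have "card S0 = card (Inr ` (V - {w0, w1, w2}) :: ('a + 'a) set) + card (Inl ` (V - R) :: ('a + 'a) set)"
      unfolding S0_def
      apply (rule card_Un_disjoint)
      using fin apply auto
      done
    also have "\<dots> = (n - 3) + (n - card (g ` V))" using c3 cVR by (simp add: card_image)
    finally show ?thesis using s2 n3 unfolding n_def by linarith
  qed
  have degInl: "deg (Inl u) \<le> n" if uV: "u \<in> V" for u
  proof -
    have sub: "{v\<in>?FV. ?FE (Inl u) v} \<subseteq> insert (Inr (g u)) (Inl ` (V - {u}))"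
    proof
      fix v assume "v \<in> {v\<in>?FV. ?FE (Inl u) v}"
      then show "v \<in> insert (Inr (g u)) (Inl ` (V - {u}))"
        by (cases v) (auto simp: functigraph_V_def)
    qed
    have f: "finite (insert (Inr (g u)) (Inl ` (V - {u})))" using fin by simp
    have "deg (Inl u) \<le> card (insert (Inr (g u)) (Inl ` (V - {u})))"
      unfolding deg_def by (rule card_mono[OF f sub])
    also have "\<dots> \<le> Suc (card (Inl ` (V - {u}) :: ('a + 'a) set))"
      using fin by (simp add: card_insert_if)
    also have "\<dots> = Suc (card (V - {u}))" by (simp add: card_image)
    also have "\<dots> = n" using that fin n3 unfolding n_def by simp
    finally show ?thesis .
  qed
  have degInr1: "Suc n \<le> deg (Inr w1)"
  proof -
    have sub: "insert (Inl u1) (insert (Inl (r w1)) (Inr ` (V - {w1}))) \<subseteq> {v\<in>?FV. ?FE (Inr w1) v}"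
    proof
      fix v assume v: "v \<in> insert (Inl u1) (insert (Inl (r w1)) (Inr ` (V - {w1})))"
      show "v \<in> {v\<in>?FV. ?FE (Inr w1) v}"
      proof (cases "v = Inl u1")
        case True then show ?thesis using u1 by (simp add: functigraph_V_def)
      next
        case f1: False
        show ?thesis
        proof (cases "v = Inl (r w1)")
          case True then show ?thesis using rp[OF w1(1)] by (simp add: functigraph_V_def)
        next
          case False then have "v \<in> Inr ` (V - {w1})" using v f1 by simp
          then show ?thesis by (auto simp: functigraph_V_def)
        qed
      qed
    qed
    have "card (insert (Inl u1) (insert (Inl (r w1)) (Inr ` (V - {w1})))) = Suc (Suc (card (Inr ` (V - {w1}) :: ('a + 'a) set)))"
    proof -
      have f: "finite (Inr ` (V - {w1}) :: ('a + 'a) set)" using fin by simp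
      have n1: "Inl (r w1) \<notin> (Inr ` (V - {w1}) :: ('a + 'a) set)" by auto
      have n2: "Inl u1 \<notin> insert (Inl (r w1)) (Inr ` (V - {w1}) :: ('a + 'a) set)" using u1 by auto
      show ?thesis using f n1 n2 by (simp add: card_insert_disjoint del: insert_iff)
    qed
    also have "\<dots> = Suc (Suc (card (V - {w1})))" by (simp add: card_image)
    also have "\<dots> = Suc n" using w1 fin n3 unfolding n_def by simp
    finally show ?thesis unfolding deg_def using card_mono[OF _ sub] finFV by simp
  qed
  have cover: "y \<in> S0 \<or> (\<exists>w\<in>g ` V. y = Inl (r w)) \<or> y = Inr w0 \<or> y = Inr w1 \<or> y = Inr w2"
    if y: "y \<in> ?FV" for y
  proof (cases y)
    case (Inl u)
    then have uV: "u \<in> V" using y unfolding functigraph_V_def by auto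
    show ?thesis
    proof (cases "u \<in> R")
      case True then show ?thesis using Inl unfolding R_def by auto
    next
      case False then show ?thesis using Inl uV unfolding S0_def by auto
    qed
  next
    case (Inr v)
    then have vV: "v \<in> V" using y unfolding functigraph_V_def by auto
    show ?thesis
    proof (cases "v \<in> {w0, w1, w2}")
      case True then show ?thesis using Inr by auto
    next
      case False then show ?thesis using Inr vV unfolding S0_def by auto
    qed
  qed
  have fs: "fixing_set ?FV ?FE S0"
    unfolding fixing_set_def
  proof (intro conjI allI impI)
    show "S0 \<subseteq> ?FV" by (rule S0FV)
    fix \<sigma> assume H: "graph_aut ?FV ?FE \<sigma> \<and> (\<forall>x\<in>S0. \<sigma> x = x)"
    then have aut: "graph_aut ?FV ?FE \<sigma>" and fS0: "\<forall>x\<in>S0. \<sigma> x = x" by auto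
    have st1: "\<sigma> (Inr w1) = Inr w1"
    proof (rule fix_step[OF aut S0FV fS0])
      show "Inr w1 \<in> ?FV" using w1 unfolding functigraph_V_def by auto
      show "\<forall>y\<in>?FV. y \<noteq> Inr w1 \<longrightarrow> y \<notin> S0 \<longrightarrow>
         (\<exists>z\<in>S0. ?FE (Inr w1) z \<noteq> ?FE y z) \<or> card {v\<in>?FV. ?FE (Inr w1) v} \<noteq> card {v\<in>?FV. ?FE y v}"
      proof (intro ballI impI)
        fix y assume y: "y \<in> ?FV" "y \<noteq> Inr w1" "y \<notin> S0"
        show "(\<exists>z\<in>S0. ?FE (Inr w1) z \<noteq> ?FE y z) \<or> card {v\<in>?FV. ?FE (Inr w1) v} \<noteq> card {v\<in>?FV. ?FE y v}"
        proof (cases y)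
          case (Inl u)
          then have "u \<in> V" using y unfolding functigraph_V_def by auto
          then have "deg y < deg (Inr w1)" using degInl degInr1 Inl by fastforce
          then show ?thesis unfolding deg_def by auto
        next
          case (Inr v)
          then have "v \<noteq> w1" using y by auto
          moreover have "Inl u1 \<in> S0" using u1 u1R unfolding S0_def by auto
          ultimately show ?thesis using Inr u1 by (intro disjI1 bexI[of _ "Inl u1"]) auto
        qed
      qed
    qed
    define T1 where "T1 = insert (Inr w1) S0"
    have T1FV: "T1 \<subseteq> ?FV" using S0FV w1 unfolding T1_def functigraph_V_def by auto
    have fT1: "\<forall>z\<in>T1. \<sigma> z = z" using fS0 st1 unfolding T1_def by auto
    have u1T1: "Inl u1 \<in> T1" using u1 u1R unfolding S0_def T1_def by auto
    have st2: "\<sigma> (Inl (r w)) = Inl (r w)" if wg: "w \<in> g ` V" for w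
    proof (rule fix_step[OF aut T1FV fT1])
      show "Inl (r w) \<in> ?FV" using rp[OF wg] unfolding functigraph_V_def by auto
      show "\<forall>y\<in>?FV. y \<noteq> Inl (r w) \<longrightarrow> y \<notin> T1 \<longrightarrow>
         (\<exists>z\<in>T1. ?FE (Inl (r w)) z \<noteq> ?FE y z) \<or> card {v\<in>?FV. ?FE (Inl (r w)) v} \<noteq> card {v\<in>?FV. ?FE y v}"
      proof (intro ballI impI disjI1)
        fix y assume y: "y \<in> ?FV" "y \<noteq> Inl (r w)" "y \<notin> T1"
        show "\<exists>z\<in>T1. ?FE (Inl (r w)) z \<noteq> ?FE y z"
        proof (cases y)
          case (Inl u)
          have "u \<in> V" using y Inl unfolding functigraph_V_def by auto
          moreover have "Inl u \<notin> Inl ` (V - R)" using y Inl unfolding T1_def S0_def by blast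
          ultimately have "u \<in> R" by blast
          then obtain w' where w': "w' \<in> g ` V" "u = r w'" unfolding R_def by auto
          have ww': "w' \<noteq> w" using w' y Inl by auto
          have gw: "g (r w) = w" "g (r w') = w'" using rp wg w'(1) by auto
          have inS: "Inr q \<in> T1" if "q \<in> g ` V" "q \<noteq> w2" for q
            using that gV w0 unfolding T1_def S0_def by auto
          show ?thesis
          proof (cases "w = w2")
            case False
            then show ?thesis using inS[OF wg False] Inl w' gw ww' by (intro bexI[of _ "Inr w"]) auto
          next
            case True
            then have "w' \<noteq> w2" using ww' by simp
            then show ?thesis using inS[OF w'(1)] Inl w' gw ww' by (intro bexI[of _ "Inr w'"]) auto
          qed
        next
          case (Inr v)
          then have "v \<noteq> w1" using y unfolding T1_def by auto
          moreover have "r w \<noteq> u1" using u1R wg unfolding R_def by auto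
          ultimately show ?thesis using Inr u1 u1T1 by (intro bexI[of _ "Inl u1"]) auto
        qed
      qed
    qed
    define T2 where "T2 = T1 \<union> Inl ` R"
    have T2FV: "T2 \<subseteq> ?FV" using T1FV RV unfolding T2_def functigraph_V_def by auto
    have fT2: "\<forall>z\<in>T2. \<sigma> z = z" using fT1 st2 unfolding T2_def R_def by auto
    have st3: "\<sigma> (Inr w2) = Inr w2"
    proof (rule fix_step[OF aut T2FV fT2])
      show "Inr w2 \<in> ?FV" using w2V unfolding functigraph_V_def by auto
      show "\<forall>y\<in>?FV. y \<noteq> Inr w2 \<longrightarrow> y \<notin> T2 \<longrightarrow>
         (\<exists>z\<in>T2. ?FE (Inr w2) z \<noteq> ?FE y z) \<or> card {v\<in>?FV. ?FE (Inr w2) v} \<noteq> card {v\<in>?FV. ?FE y v}"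
      proof (intro ballI impI disjI1)
        fix y assume y: "y \<in> ?FV" "y \<noteq> Inr w2" "y \<notin> T2"
        have yw0: "y = Inr w0"
        proof -
          have "y \<notin> S0" "y \<noteq> Inr w1" "\<forall>w\<in>g ` V. y \<noteq> Inl (r w)" using y unfolding T2_def T1_def R_def by auto
          then show ?thesis using cover[OF y(1)] y(2) by blast
        qed
        have "Inl (r w2) \<in> T2" using w2 unfolding T2_def R_def by auto
        moreover have "g (r w2) = w2" using rp[OF w2(1)] by simp
        ultimately show "\<exists>z\<in>T2. ?FE (Inr w2) z \<noteq> ?FE y z" using yw0 dist
          by (intro bexI[of _ "Inl (r w2)"]) auto
      qed
    qed
    define T3 where "T3 = insert (Inr w2) T2"
    have T3FV: "T3 \<subseteq> ?FV" using T2FV w2V unfolding T3_def functigraph_V_def by auto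
    have fT3: "\<forall>z\<in>T3. \<sigma> z = z" using fT2 st3 unfolding T3_def by auto
    have st4: "\<sigma> (Inr w0) = Inr w0"
    proof (rule fix_step[OF aut T3FV fT3])
      show "Inr w0 \<in> ?FV" using w0 unfolding functigraph_V_def by auto
      show "\<forall>y\<in>?FV. y \<noteq> Inr w0 \<longrightarrow> y \<notin> T3 \<longrightarrow>
         (\<exists>z\<in>T3. ?FE (Inr w0) z \<noteq> ?FE y z) \<or> card {v\<in>?FV. ?FE (Inr w0) v} \<noteq> card {v\<in>?FV. ?FE y v}"
      proof (intro ballI impI)
        fix y assume y: "y \<in> ?FV" "y \<noteq> Inr w0" "y \<notin> T3"
        have "y \<notin> S0" "y \<noteq> Inr w1" "y \<noteq> Inr w2" "\<forall>w\<in>g ` V. y \<noteq> Inl (r w)" using y unfolding T3_def T2_def T1_def R_def by auto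
        then have False using cover[OF y(1)] y(2) by blast
        then show "(\<exists>z\<in>T3. ?FE (Inr w0) z \<noteq> ?FE y z) \<or> card {v\<in>?FV. ?FE (Inr w0) v} \<noteq> card {v\<in>?FV. ?FE y v}" ..
      qed
    qed
    have "?FV \<subseteq> insert (Inr w0) T3"
    proof
      fix y assume y: "y \<in> ?FV"
      show "y \<in> insert (Inr w0) T3"
        using cover[OF y] unfolding T3_def T2_def T1_def R_def by auto
    qed
    then show "\<forall>x\<in>?FV. \<sigma> x = x" using fT3 st4 by auto
  qed
  show ?thesis using fs cS0 by blast
qed

theorem theorem3p1:
  fixes V :: "'a set" and g :: "'a \<Rightarrow> 'a" and n s :: nat
  assumes "finite V" and "card V = n" and "n \<ge> 3"
    and "g ` V \<subseteq> V"
    and "s = card (g ` V)" and "1 < s" and "s < n"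
  shows "2 * (n - s) - 1 \<le> fix_num (functigraph_V V) (functigraph_E (\<lambda>x y. x \<noteq> y) g)
       \<and> fix_num (functigraph_V V) (functigraph_E (\<lambda>x y. x \<noteq> y) g) \<le> 2 * n - s - 3"
proof -
  let ?FV = "functigraph_V V" and ?FE = "functigraph_E (\<lambda>x y. x \<noteq> y) g"
  let ?C = "card ` {S. fixing_set ?FV ?FE S}"
  have finFV: "finite ?FV" using assms(1) unfolding functigraph_V_def by auto
  have "{S. fixing_set ?FV ?FE S} \<subseteq> Pow ?FV" unfolding fixing_set_def by auto
  then have finC: "finite ?C" using finFV by (meson finite_Pow_iff finite_imageI finite_subset)
  obtain S0 where S0: "fixing_set ?FV ?FE S0" "card S0 = 2 * card V - card (g ` V) - 3"
    using upper_set[OF assms(1,4)] assms by auto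
  have ne: "?C \<noteq> {}" using S0 by auto
  have low: "\<forall>c\<in>?C. 2 * (n - s) - 1 \<le> c"
  proof
    fix c assume "c \<in> ?C"
    then obtain S where "fixing_set ?FV ?FE S" "c = card S" by auto
    then show "2 * (n - s) - 1 \<le> c" using lower_card[OF assms(1,4)] assms by fastforce
  qed
  have "2 * (n - s) - 1 \<le> Min ?C" using Min_ge_iff[OF finC ne] low by blast
  moreover have "Min ?C \<le> 2 * n - s - 3" using Min_le[OF finC] S0 assms by force
  ultimately show ?thesis unfolding fix_num_def by simp
qed

end
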